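(* Let $F\in\mathbb{C}[x]$ be a polynomial of degree $n\ge 2$, let $\Delta$ be a disk in $\mathbb{C}$, and let $N:=\lceil\log_2(1+\log_2 n)\rceil+5$, $\rho_1:=\frac{2\sqrt2}{3}$, $\rho_2:=\frac43$. Then $\left(\frac{1}{16n}\right)^{1/2^N}>\rho_1$, and: (a) if $\Delta$ is $(\rho_1,\rho_2)$-isolating for a set of $k$ roots of $F$, then $T_k^G(\Delta,\frac32)$ succeeds; (b) if $T_k^G(\Delta,K)$ succeeds for some $K\ge 1$, then $\Delta$ contains exactly $k$ roots of $F$ (counted with multiplicity).
   Context: $\Delta(m,r)$ is the open disk with center $m$, radius $r>0$, and $\lambda\cdot\Delta(m,r):=\Delta(m,\lambda r)$. A disk $\Delta$ is $(\rho_1,\rho_2)$-isolating for a set $S$ of roots of $F$ (with multiplicity) if $\rho_1\cdot\Delta$ contains exactly the roots in $S$ and $\rho_2\cdot\Delta\setminus\rho_1\cdot\Delta$ contains no root of $F$. For $\Delta=\Delta(m,r)$ put $F_\Delta(x):=F(m+rx)$. Graeffe iteration: writing $P(x)=P_e(x^2)+xP_o(x^2)$ for a polynomial $P$ of degree $n$, set $P^{[1]}(x):=(-1)^n[P_e(x)^2-xP_o(x)^2]$, and $P^{[j]}:=(P^{[j-1]})^{[1]}$, $P^{[0]}:=P$. For a polynomial $G=\sum_{i=0}^n g_ix^i$, $T_k(0,1,K,G)$ holds iff $|g_k|>K\sum_{i\ne k}|g_i|$. The test $T_k^G(\Delta,K)$ succeeds iff $T_k(0,1,K,F_\Delta^{[N]})$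 holds, where $F_\Delta^{[N]}$ is the $N$-th Graeffe iterate of $F_\Delta$. *)

theory Defs
  imports "HOL-Analysis.Analysis" "HOL-Computational_Algebra.Polynomial"
begin

definition even_part :: "complex poly \<Rightarrow> complex poly" where
  "even_part P = (\<Sum>i\<le>degree P. monom (coeff P (2*i)) i)"

definition odd_part :: "complex poly \<Rightarrow> complex poly" where
  "odd_part P = (\<Sum>i\<le>degree P. monom (coeff P (2*i+1)) i)"

definition graeffe :: "complex poly \<Rightarrow> complex poly" where
  "graeffe P = smult ((-1) ^ degree P) (even_part P ^ 2 - [:0, 1:] * odd_part P ^ 2)"

definition graeffe_iter :: "nat \<Rightarrow> complex poly \<Rightarrow> complex poly" where
  "graeffe_iter j P = (graeffe ^^ j) P"

text \<open>F_Delta(x) = F(m + r x) for the disk Delta(m,r).\<close>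
definition disk_poly :: "complex poly \<Rightarrow> complex \<Rightarrow> real \<Rightarrow> complex poly" where
  "disk_poly F m r = pcompose F [:m, complex_of_real r:]"

definition T_test :: "nat \<Rightarrow> real \<Rightarrow> complex poly \<Rightarrow> bool" where
  "T_test k K G \<longleftrightarrow> norm (coeff G k) > K * (\<Sum>i\<in>{..degree G} - {k}. norm (coeff G i))"

definition T_graeffe :: "nat \<Rightarrow> complex poly \<Rightarrow> nat \<Rightarrow> complex \<Rightarrow> real \<Rightarrow> real \<Rightarrow> bool" where
  "T_graeffe N F k m r K \<longleftrightarrow> T_test k K (graeffe_iter N (disk_poly F m r))"

definition root_count :: "complex poly \<Rightarrow> complex set \<Rightarrow> nat" where
  "root_count F S = (\<Sum>z\<in>{z\<in>S. poly F z = 0}. order z F)"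

definition isolating :: "complex poly \<Rightarrow> real \<Rightarrow> real \<Rightarrow> complex \<Rightarrow> real \<Rightarrow> nat \<Rightarrow> bool" where
  "isolating F \<rho>1 \<rho>2 m r k \<longleftrightarrow>
     root_count F (ball m (\<rho>1 * r)) = k \<and>
     (\<forall>z\<in>ball m (\<rho>2 * r) - ball m (\<rho>1 * r). poly F z \<noteq> 0)"

end

theory Submission imports Defs "HOL-Complex_Analysis.Complex_Analysis" "HOL-Computational_Algebra.Fundamental_Theorem_Algebra" begin

lemma zorder_poly:
  fixes p :: "complex poly"
  assumes "p \<noteq> 0"
  shows "zorder (poly p) z = int (order z p)"
proof -
  obtain q where q: "p = [:- z, 1:] ^ order z p * q" "\<not> [:- z, 1:] dvd q"
    using order_decomp[OF assms] by blast
  have qz: "poly q z \<noteq> 0" using q(2) by (simp add: poly_eq_0_iff_dvd)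
  show ?thesis
  proof (rule zorder_eqI[where S=UNIV and g="poly q"])
    fix w assume "w \<in> (UNIV::complex set)" "w \<noteq> z"
    show "poly p w = poly q w * (w - z) powi int (order z p)"
      by (subst q(1)) (simp add: power_int_of_nat mult.commute)
  qed (use qz in \<open>auto intro: holomorphic_intros\<close>)
qed

lemma poly_even_odd:
  "poly P x = poly (even_part P) (x^2) + x * poly (odd_part P) (x^2)"
proof -
  let ?d = "degree P"
  have e: "poly (even_part P) (x^2) = (\<Sum>i\<le>?d. coeff P (2*i) * x^(2*i))"
    by (simp add: even_part_def poly_sum poly_monom flip: power_mult)
  have o: "x * poly (odd_part P) (x^2) = (\<Sum>i\<le>?d. coeff P (Suc (2*i)) * x^(Suc (2*i)))"
    by (simp add: odd_part_def poly_sum poly_monom sum_distrib_left algebra_simps flip: power_mult)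
  have "(\<Sum>j\<le>Suc (2*?d). coeff P j * x^j) = (\<Sum>i\<le>?d. coeff P (2*i) * x^(2*i) + coeff P (Suc (2*i)) * x^(Suc (2*i)))"
    by (rule sum.in_pairs_0)
  also have "\<dots> = poly (even_part P) (x^2) + x * poly (odd_part P) (x^2)"
    by (simp add: e o sum.distrib)
  finally have 1: "(\<Sum>j\<le>Suc (2*?d). coeff P j * x^j) = poly (even_part P) (x^2) + x * poly (odd_part P) (x^2)" .
  have "poly P x = (\<Sum>j\<le>?d. coeff P j * x^j)" by (simp add: poly_altdef)
  also have "\<dots> = (\<Sum>j\<le>Suc (2*?d). coeff P j * x^j)"
    by (rule sum.mono_neutral_left) (auto simp: coeff_eq_0)
  finally show ?thesis using 1 by simp
qed

lemma poly_graeffe: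
  "poly (graeffe P) (x^2) = (-1)^degree P * (poly P x * poly P (-x))"
proof -
  have a: "poly P x = poly (even_part P) (x^2) + x * poly (odd_part P) (x^2)"
    by (rule poly_even_odd)
  have b: "poly P (-x) = poly (even_part P) (x^2) - x * poly (odd_part P) (x^2)"
    using poly_even_odd[of P "-x"] by simp
  show ?thesis unfolding graeffe_def a b
    by (simp add: algebra_simps power2_eq_square)
qed

lemma poly_linprod: "poly (\<Prod>w\<in>#A. [:-w, 1:]) x = (\<Prod>w\<in>#A. x - (w::complex))"
  by (induction A) (auto simp: left_diff_distrib)

lemma linprod_monic: "lead_coeff (\<Prod>w\<in>#A. [:-w, 1:] :: complex poly) = 1 \<and> degree (\<Prod>w\<in>#A. [:-w, 1:] :: complex poly) = size A"
proof (induction A)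
  case (add x A)
  let ?P = "(\<Prod>w\<in>#A. [:-w, 1:] :: complex poly)"
  have P0: "?P \<noteq> 0" using add by auto
  have e: "(\<Prod>w\<in>#add_mset x A. [:-w, 1:]) = [:-x, 1:] * ?P" by simp
  have d: "degree ([:-x,1:] * ?P) = Suc (size A)"
    by (subst degree_mult_eq) (use add P0 in auto)
  have l: "lead_coeff ([:-x,1:] * ?P) = 1"
    by (subst lead_coeff_mult) (use add.IH in \<open>simp, metis\<close>)
  show ?case unfolding e using d l by simp
qed simp

lemma degree_linprod: "degree (\<Prod>w\<in>#A. [:-w, 1:] :: complex poly) = size A"
  using linprod_monic by blast

lemma linprod_neg: "(\<Prod>w\<in>#A. (-x - w::complex)) = (-1)^size A * (\<Prod>w\<in>#A. x + w)"
  by (induction A) (auto simp: algebra_simps)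

lemma linprod_sq: "(\<Prod>w\<in>#A. (x - w::complex)) * (\<Prod>w\<in>#A. x + w) = (\<Prod>w\<in>#A. x^2 - w^2)"
  by (induction A) (auto simp: algebra_simps power2_eq_square)

lemma graeffe_linprod:
  fixes c :: complex
  assumes "c \<noteq> 0"
  shows "graeffe (smult c (\<Prod>w\<in>#A. [:-w, 1:])) = smult (c^2) (\<Prod>w\<in>#A. [:-(w^2), 1:])"
proof -
  let ?P = "smult c (\<Prod>w\<in>#A. [:-w, 1:])"
  let ?Q = "smult (c^2) (\<Prod>w\<in>#A. [:-(w^2), 1:])"
  have deg: "degree ?P = size A" using assms by (simp add: degree_linprod)
  have "poly (pcompose (graeffe ?P) [:0,0,1:]) x = poly (pcompose ?Q [:0,0,1:]) x" for x
  proof -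
    have "poly (pcompose (graeffe ?P) [:0,0,1:]) x = poly (graeffe ?P) (x^2)"
      by (simp add: poly_pcompose power2_eq_square)
    also have "\<dots> = (-1)^size A * (c * (\<Prod>w\<in>#A. x - w)) * (c * ((-1)^size A * (\<Prod>w\<in>#A. x + w)))"
      by (simp add: poly_graeffe deg poly_linprod linprod_neg degree_linprod)
    also have "\<dots> = c^2 * ((\<Prod>w\<in>#A. x - w) * (\<Prod>w\<in>#A. x + w))"
      by (simp add: algebra_simps power2_eq_square flip: power_add mult_2)
    also have "\<dots> = poly (pcompose ?Q [:0,0,1:]) x"
      by (simp add: linprod_sq poly_pcompose poly_linprod poly_prod_mset power2_eq_square)
    finally show ?thesis .
  qed
  hence "pcompose (graeffe ?P) [:0,0,1:] = pcompose ?Q [:0,0,1:]"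
    by (simp add: poly_eq_poly_eq_iff[symmetric] fun_eq_iff)
  hence "pcompose (graeffe ?P - ?Q) [:0,0,1:] = 0" by (simp add: pcompose_diff)
  hence "graeffe ?P - ?Q = 0" by (rule pcompose_eq_0) simp
  thus ?thesis by simp
qed


lemma graeffe_iter_linprod:
  fixes c :: complex
  assumes "c \<noteq> 0"
  shows "graeffe_iter j (smult c (\<Prod>w\<in>#A. [:-w, 1:])) = smult (c^(2^j)) (\<Prod>w\<in>#A. [:-(w^(2^j)), 1:])"
proof (induction j)
  case 0
  then show ?case by (simp add: graeffe_iter_def)
next
  case (Suc j)
  have "graeffe_iter (Suc j) (smult c (\<Prod>w\<in>#A. [:-w, 1:])) = graeffe (graeffe_iter j (smult c (\<Prod>w\<in>#A. [:-w, 1:])))"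
    by (simp add: graeffe_iter_def)
  also have "\<dots> = graeffe (smult (c^(2^j)) (\<Prod>w\<in>#image_mset (\<lambda>w. w^(2^j)) A. [:-w, 1:]))"
    by (simp add: Suc image_mset.compositionality o_def)
  also have "\<dots> = smult ((c^(2^j))^2) (\<Prod>w\<in>#image_mset (\<lambda>w. w^(2^j)) A. [:-(w^2), 1:])"
    by (rule graeffe_linprod) (use assms in simp)
  also have "\<dots> = smult (c^(2^Suc j)) (\<Prod>w\<in>#A. [:-(w^(2^Suc j)), 1:])"
    by (simp add: image_mset.compositionality o_def mult.commute flip: power_mult)
  finally show ?case .
qed

lemma pcompose_linprod:
  fixes r :: complex
  assumes "r \<noteq> 0"
  shows "pcompose (\<Prod>w\<in>#R. [:-w, 1:]) [:m, r:] = smult (r^size R) (\<Prod>w\<in>#R. [:-((w-m)/r), 1:])"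
proof (induction R)
  case (add x R)
  have e: "pcompose [:-x, 1:] [:m, r:] = smult r [:-((x-m)/r), 1:]"
    using assms by (simp add: pcompose_pCons field_simps)
  have "pcompose (\<Prod>w\<in>#add_mset x R. [:-w, 1:]) [:m, r:] = pcompose [:-x, 1:] [:m, r:] * pcompose (\<Prod>w\<in>#R. [:-w, 1:]) [:m, r:]"
    by (simp only: prod_mset.add_mset image_mset_add_mset pcompose_mult)
  also have "\<dots> = smult r [:-((x-m)/r), 1:] * smult (r^size R) (\<Prod>w\<in>#R. [:-((w-m)/r), 1:])"
    by (simp only: e add)
  also have "\<dots> = smult (r^size (add_mset x R)) (\<Prod>w\<in>#add_mset x R. [:-((w-m)/r), 1:])"
    by (simp only: mult_smult_left mult_smult_right smult_smult prod_mset.add_mset image_mset_add_mset size_add_mset power_Suc mult.commute)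
  finally show ?case .
qed (simp add: one_pCons)

lemma proots_linprod: "proots (\<Prod>w\<in>#A. [:-w, 1:] :: complex poly) = A"
proof (induction A)
  case (add x A)
  have "(\<Prod>w\<in>#A. [:-w, 1:] :: complex poly) \<noteq> 0" by auto
  then show ?case using add by (simp add: proots_mult del: mult_pCons_left)
qed simp


definition norm1 :: "complex poly \<Rightarrow> real" where
  "norm1 p = (\<Sum>i\<le>degree p. norm (coeff p i))"

lemma norm1_upto:
  assumes "degree p \<le> N"
  shows "norm1 p = (\<Sum>i\<le>N. norm (coeff p i))"
  unfolding norm1_def
  by (rule sum.mono_neutral_left) (use assms in \<open>auto simp: coeff_eq_0\<close>)

lemma norm1_nonneg: "norm1 p \<ge> 0"
  by (simp add: norm1_def sum_nonneg)

lemma norm1_add: "norm1 (p + q) \<le> norm1 p + norm1 q"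
proof -
  let ?N = "max (degree p) (degree q)"
  have "norm1 (p + q) = (\<Sum>i\<le>?N. norm (coeff (p+q) i))"
    by (rule norm1_upto) (simp add: degree_add_le)
  also have "\<dots> \<le> (\<Sum>i\<le>?N. norm (coeff p i) + norm (coeff q i))"
    by (rule sum_mono) (simp add: norm_triangle_ineq)
  also have "\<dots> = norm1 p + norm1 q"
    by (simp add: sum.distrib norm1_upto[of p ?N] norm1_upto[of q ?N])
  finally show ?thesis .
qed

lemma norm1_minus: "norm1 (- p) = norm1 p"
  by (simp add: norm1_def)

lemma norm1_diff: "norm1 (p - q) \<le> norm1 p + norm1 q"
  using norm1_add[of p "-q"] by (simp add: norm1_minus)

lemma norm1_smult: "norm1 (smult a p) = norm a * norm1 p"
proof (cases "a = 0")
  case False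
  then show ?thesis by (simp add: norm1_def sum_distrib_left norm_mult)
qed (simp add: norm1_def)

lemma norm1_pCons: "norm1 (pCons a p) = norm a + norm1 p"
proof -
  have "norm1 (pCons a p) = (\<Sum>i\<le>Suc (degree p). norm (coeff (pCons a p) i))"
    by (rule norm1_upto) (simp add: degree_pCons_le)
  also have "\<dots> = norm a + (\<Sum>i\<le>degree p. norm (coeff p i))"
    by (subst sum.atMost_Suc_shift) simp
  finally show ?thesis by (simp add: norm1_def)
qed

lemma norm1_0 [simp]: "norm1 0 = 0"
  by (simp add: norm1_def)

lemma norm1_1 [simp]: "norm1 1 = 1"
  by (simp add: norm1_def)

lemma norm1_monom1 [simp]: "norm1 (monom 1 k) = 1"
proof -
  have "norm1 (monom 1 k) = (\<Sum>i\<le>k. norm (coeff (monom (1::complex) k) i))"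
    by (rule norm1_upto) (simp add: degree_monom_le)
  also have "\<dots> = (\<Sum>i\<le>k. if i = k then 1 else 0)"
    by (rule sum.cong) (auto simp: coeff_monom)
  finally show ?thesis by simp
qed

lemma norm1_mult: "norm1 (p * q) \<le> norm1 p * norm1 q"
proof (induction p)
  case (pCons a p)
  have "norm1 (pCons a p * q) = norm1 (smult a q + pCons 0 (p * q))" by simp
  also have "\<dots> \<le> norm a * norm1 q + norm1 (p * q)"
    using norm1_add[of "smult a q" "pCons 0 (p * q)"] by (simp add: norm1_smult norm1_pCons norm1_minus)
  also have "\<dots> \<le> norm a * norm1 q + norm1 p * norm1 q" using pCons.IH by simp
  also have "\<dots> = norm1 (pCons a p) * norm1 q" by (simp add: norm1_pCons algebra_simps)
  finally show ?case .
qed simp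

lemma prod_mset_nonneg':
  assumes "\<And>w. w \<in># A \<Longrightarrow> 0 \<le> (f w::real)"
  shows "0 \<le> (\<Prod>w\<in>#A. f w)"
  using assms by (induction A) auto

lemma linprod_bound:
  "norm1 (\<Prod>w\<in>#A. [:-w, 1:]) \<le> (\<Prod>w\<in>#A. 1 + norm w) \<and>
   norm1 ((\<Prod>w\<in>#A. [:-w, 1:]) - monom 1 (size A)) \<le> (\<Prod>w\<in>#A. 1 + norm w) - 1"
proof (induction A)
  case empty
  then show ?case by simp
next
  case (add x A)
  let ?P = "(\<Prod>w\<in>#A. [:-w, 1:] :: complex poly)"
  let ?p = "(\<Prod>w\<in>#A. 1 + norm (w::complex))"
  have p0: "?p \<ge> 0" by (rule prod_mset_nonneg') auto
  have e: "(\<Prod>w\<in>#add_mset x A. [:-w, 1:]) = smult (-x) ?P + pCons 0 ?P"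
    by simp
  have e2: "(\<Prod>w\<in>#add_mset x A. [:-w, 1:]) - monom 1 (size (add_mset x A)) = smult (-x) ?P + pCons 0 (?P - monom 1 (size A))"
    by (simp add: monom_Suc)
  have "norm1 (\<Prod>w\<in>#add_mset x A. [:-w, 1:]) \<le> norm x * norm1 ?P + norm1 ?P"
    unfolding e using norm1_add[of "smult (-x) ?P" "pCons 0 ?P"] by (simp add: norm1_smult norm1_pCons norm1_minus)
  also have "\<dots> \<le> norm x * ?p + ?p"
    using add.IH by (intro add_mono mult_left_mono) auto
  finally have 1: "norm1 (\<Prod>w\<in>#add_mset x A. [:-w, 1:]) \<le> (\<Prod>w\<in>#add_mset x A. 1 + norm w)"
    by (simp add: algebra_simps)
  have "norm1 ((\<Prod>w\<in>#add_mset x A. [:-w, 1:]) - monom 1 (size (add_mset x A))) \<le> norm x * norm1 ?P + norm1 (?P - monom 1 (size A))"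
    unfolding e2 using norm1_add[of "smult (-x) ?P" "pCons 0 (?P - monom 1 (size A))"]
    by (simp add: norm1_smult norm1_pCons norm1_minus)
  also have "\<dots> \<le> norm x * ?p + (?p - 1)"
    using add.IH by (intro add_mono mult_left_mono) auto
  finally have 2: "norm1 ((\<Prod>w\<in>#add_mset x A. [:-w, 1:]) - monom 1 (size (add_mset x A))) \<le> (\<Prod>w\<in>#add_mset x A. 1 + norm w) - 1"
    by (simp add: algebra_simps)
  show ?case using 1 2 by blast
qed

lemma revprod_bound:
  "norm1 (\<Prod>w\<in>#A. [:1, -w:]) \<le> (\<Prod>w\<in>#A. 1 + norm w) \<and>
   norm1 ((\<Prod>w\<in>#A. [:1, -w:]) - 1) \<le> (\<Prod>w\<in>#A. 1 + norm w) - 1"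
proof (induction A)
  case empty
  then show ?case by simp
next
  case (add x A)
  let ?P = "(\<Prod>w\<in>#A. [:1, -w:] :: complex poly)"
  let ?p = "(\<Prod>w\<in>#A. 1 + norm (w::complex))"
  have e: "(\<Prod>w\<in>#add_mset x A. [:1, -w:]) = ?P + pCons 0 (smult (-x) ?P)"
    by simp
  have e2: "(\<Prod>w\<in>#add_mset x A. [:1, -w:]) - 1 = (?P - 1) + pCons 0 (smult (-x) ?P)"
    by simp
  have "norm1 (\<Prod>w\<in>#add_mset x A. [:1, -w:]) \<le> norm1 ?P + norm x * norm1 ?P"
    unfolding e using norm1_add[of "?P" "pCons 0 (smult (-x) ?P)"] by (simp add: norm1_smult norm1_pCons norm1_minus)
  also have "\<dots> \<le> ?p + norm x * ?p"
    using add.IH by (intro add_mono mult_left_mono) auto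
  finally have 1: "norm1 (\<Prod>w\<in>#add_mset x A. [:1, -w:]) \<le> (\<Prod>w\<in>#add_mset x A. 1 + norm w)"
    by (simp add: algebra_simps)
  have "norm1 ((\<Prod>w\<in>#add_mset x A. [:1, -w:]) - 1) \<le> norm1 (?P - 1) + norm x * norm1 ?P"
    unfolding e2 using norm1_add[of "?P - 1" "pCons 0 (smult (-x) ?P)"]
    by (simp add: norm1_smult norm1_pCons norm1_minus)
  also have "\<dots> \<le> (?p - 1) + norm x * ?p"
    using add.IH by (intro add_mono mult_left_mono) auto
  finally have 2: "norm1 ((\<Prod>w\<in>#add_mset x A. [:1, -w:]) - 1) \<le> (\<Prod>w\<in>#add_mset x A. 1 + norm w) - 1"
    by (simp add: algebra_simps)
  show ?case using 1 2 by blast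
qed

lemma prod_mset_le_pow:
  assumes "\<And>w. w \<in># A \<Longrightarrow> 0 \<le> f w \<and> f w \<le> (e::real)"
  shows "(\<Prod>w\<in>#A. f w) \<le> e ^ size A"
  using assms
proof (induction A)
  case (add x A)
  have "(\<Prod>w\<in>#A. f w) \<ge> 0" by (rule prod_mset_nonneg') (use add.prems in auto)
  moreover have "(\<Prod>w\<in>#A. f w) \<le> e ^ size A" using add by auto
  ultimately show ?case using add.prems[of x]
    by (auto intro: mult_mono)
qed simp

lemma test_from_norm1:
  assumes "degree H \<ge> k" "norm1 (H - monom 1 k) < 2/5"
  shows "T_test k (3/2) H"
proof -
  let ?R = "H - monom 1 k"
  let ?d = "degree H"
  have dR: "degree ?R \<le> ?d"
    by (rule degree_diff_le) (use assms(1) in \<open>auto intro: order_trans[OF degree_monom_le]\<close>)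
  have "norm1 ?R = (\<Sum>i\<le>?d. norm (coeff ?R i))" by (rule norm1_upto[OF dR])
  also have "\<dots> = norm (coeff ?R k) + (\<Sum>i\<in>{..?d}-{k}. norm (coeff ?R i))"
    by (subst sum.remove[of _ k]) (use assms(1) in auto)
  also have "(\<Sum>i\<in>{..?d}-{k}. norm (coeff ?R i)) = (\<Sum>i\<in>{..?d}-{k}. norm (coeff H i))"
    by (rule sum.cong) (auto simp: coeff_monom)
  finally have S: "norm1 ?R = norm (coeff ?R k) + (\<Sum>i\<in>{..?d}-{k}. norm (coeff H i))" .
  have Hk: "coeff H k = 1 + coeff ?R k" by (simp add: coeff_monom)
  have "norm (coeff H k) \<ge> 1 - norm (coeff ?R k)"
    using norm_triangle_ineq4[of "coeff H k" "coeff H k - 1"] by (simp add: coeff_monom)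
  moreover have "norm (coeff ?R k) \<ge> 0" by simp
  ultimately show ?thesis unfolding T_test_def using S assms(2) by linarith
qed

lemma T_test_smult:
  assumes "c \<noteq> 0"
  shows "T_test k K (smult c H) \<longleftrightarrow> T_test k K H"
proof -
  have "T_test k K (smult c H) \<longleftrightarrow> norm c * norm (coeff H k) > norm c * (K * (\<Sum>i\<in>{..degree H} - {k}. norm (coeff H i)))"
    using assms by (simp add: T_test_def norm_mult sum_distrib_left algebra_simps)
  also have "\<dots> \<longleftrightarrow> T_test k K H"
    using assms by (simp add: T_test_def)
  finally show ?thesis .
qed


lemma root_count_size:
  assumes "F \<noteq> 0"
  shows "root_count F S = size (filter_mset (\<lambda>z. z \<in> S) (proots F))"
proof -
  have "size (filter_mset (\<lambda>z. z \<in> S) (proots F)) = sum (count (filter_mset (\<lambda>z. z \<in> S) (proots F))) (set_mset (filter_mset (\<lambda>z. z \<in> S) (proots F)))"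
    by (rule size_multiset_overloaded_eq)
  also have "set_mset (filter_mset (\<lambda>z. z \<in> S) (proots F)) = {z\<in>S. poly F z = 0}"
    using assms by auto
  also have "sum (count (filter_mset (\<lambda>z. z \<in> S) (proots F))) {z\<in>S. poly F z = 0} = (\<Sum>z\<in>{z\<in>S. poly F z = 0}. order z F)"
    by (rule sum.cong) (use assms in \<open>auto simp: count_proots\<close>)
  finally show ?thesis by (simp add: root_count_def)
qed

lemma poly_upto:
  fixes p :: "complex poly"
  assumes "degree p \<le> N"
  shows "poly p x = (\<Sum>i\<le>N. coeff p i * x^i)"
proof -
  have "poly p x = (\<Sum>i\<le>degree p. coeff p i * x^i)" by (simp add: poly_altdef)
  also have "\<dots> = (\<Sum>i\<le>N. coeff p i * x^i)"
    by (rule sum.mono_neutral_left) (use assms in \<open>auto simp: coeff_eq_0\<close>)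
  finally show ?thesis .
qed

lemma pellet:
  assumes T: "T_test k K G" and K: "K \<ge> 1"
  shows "root_count G (ball 0 1) = k"
proof -
  define c where "c = coeff G k"
  define S where "S = (\<Sum>i\<in>{..degree G} - {k}. norm (coeff G i))"
  define \<gamma> where "\<gamma> = circlepath (0::complex) 1"
  have S0: "S \<ge> 0" unfolding S_def by (simp add: sum_nonneg)
  have cS: "norm c > S" using T K S0 unfolding T_test_def c_def S_def[symmetric]
    by (smt (verit, ccfv_SIG) mult_le_cancel_right1)
  hence c0: "c \<noteq> 0" using S0 by auto
  hence kd: "k \<le> degree G" unfolding c_def using le_degree by blast
  have G0: "G \<noteq> 0" using c0 unfolding c_def by auto
  have bound: "norm (poly (G - monom c k) z) \<le> S" if "norm z = 1" for z
  proof -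
    have "degree (G - monom c k) \<le> degree G"
      by (rule degree_diff_le) (use kd in \<open>auto intro: order_trans[OF degree_monom_le]\<close>)
    hence "poly (G - monom c k) z = (\<Sum>i\<le>degree G. coeff (G - monom c k) i * z^i)"
      by (rule poly_upto)
    also have "\<dots> = coeff (G - monom c k) k * z^k + (\<Sum>i\<in>{..degree G}-{k}. coeff (G - monom c k) i * z^i)"
      by (subst sum.remove[of _ k]) (use kd in auto)
    also have "\<dots> = (\<Sum>i\<in>{..degree G}-{k}. coeff G i * z^i)"
      by (auto simp: coeff_monom c_def intro!: sum.cong)
    finally have "norm (poly (G - monom c k) z) \<le> (\<Sum>i\<in>{..degree G}-{k}. norm (coeff G i * z^i))"
      by (simp add: norm_sum)
    also have "\<dots> = S" unfolding S_def by (simp add: norm_mult norm_power that)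
    finally show ?thesis .
  qed
  have less: "norm (poly (monom c k) z) > norm (poly (G - monom c k) z)" if "norm z = 1" for z
    using bound[OF that] cS by (simp add: poly_monom norm_mult norm_power that)
  have fg: "(\<lambda>p. poly (monom c k) p + poly (G - monom c k) p) = poly G"
    by (auto simp: fun_eq_iff)
  have hol: "poly q holomorphic_on UNIV" for q :: "complex poly"
    using poly_holomorphic_on[of "\<lambda>z. z" UNIV q] by (simp add: holomorphic_on_ident)
  have mc0: "monom c k \<noteq> 0" using c0 by simp
  have R: "(\<Sum>p\<in>{p. poly G p = 0}. winding_number \<gamma> p * of_int (zorder (poly G) p))
        = (\<Sum>p\<in>{p. poly (monom c k) p = 0}. winding_number \<gamma> p * of_int (zorder (poly (monom c k)) p))"
  proof -
    have "(\<Sum>p | p \<in> UNIV \<and> poly (monom c k) p + poly (G - monom c k) p = 0.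
      winding_number \<gamma> p * complex_of_int (zorder (\<lambda>p. poly (monom c k) p + poly (G - monom c k) p) p)) =
      (\<Sum>p | p \<in> UNIV \<and> poly (monom c k) p = 0.
      winding_number \<gamma> p * complex_of_int (zorder (poly (monom c k)) p))"
    proof (rule Rouche_theorem)
      show "finite {p \<in> UNIV. poly (monom c k) p + poly (G - monom c k) p = 0}"
        using poly_roots_finite[OF G0] by simp
      show "finite {p \<in> UNIV. poly (monom c k) p = 0}"
        using poly_roots_finite[OF mc0] by simp
      show "\<forall>z\<in>path_image \<gamma>. cmod (poly (G - monom c k) z) < cmod (poly (monom c k) z)"
        unfolding \<gamma>_def using less by simp
      show "poly (G - monom c k) holomorphic_on UNIV" by (rule hol)
    qed (auto simp: \<gamma>_def hol)
    then show ?thesis unfolding fg by simp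
  qed
  have roots_ne: "norm p \<noteq> 1" if "poly G p = 0" for p
  proof
    assume p1: "norm p = 1"
    have "poly G p = poly (monom c k) p + poly (G - monom c k) p" by simp
    hence "poly (monom c k) p = - poly (G - monom c k) p" using that by (simp add: eq_neg_iff_add_eq_0)
    hence "norm (poly (monom c k) p) = norm (poly (G - monom c k) p)" by simp
    with less[OF p1] show False by simp
  qed
  have wind: "winding_number \<gamma> p = (if norm p < 1 then 1 else 0)" if "poly G p = 0" for p
  proof (cases "norm p < 1")
    case True
    then show ?thesis unfolding \<gamma>_def using winding_number_circlepath[of p 0 1] by simp
  next
    case False
    hence "norm p > 1" using roots_ne[OF that] by simp
    hence "winding_number \<gamma> p = 0" unfolding \<gamma>_def
      by (intro winding_number_zero_outside[of _ "cball 0 1"]) auto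
    then show ?thesis using False by simp
  qed
  have "(\<Sum>p\<in>{p. poly G p = 0}. winding_number \<gamma> p * of_int (zorder (poly G) p))
      = (\<Sum>p\<in>{p. poly G p = 0}. if norm p < 1 then of_nat (order p G) else 0)"
    by (rule sum.cong) (auto simp: wind zorder_poly[OF G0])
  also have "\<dots> = (\<Sum>p\<in>{p\<in>{p. poly G p = 0}. norm p < 1}. of_nat (order p G))"
    by (rule sum.inter_filter[symmetric]) (rule poly_roots_finite[OF G0])
  also have "{p\<in>{p. poly G p = 0}. norm p < 1} = {p\<in>ball 0 1. poly G p = 0}" by auto
  also have "(\<Sum>p\<in>{p\<in>ball 0 1. poly G p = 0}. (of_nat (order p G) :: complex)) = of_nat (root_count G (ball 0 1))"
    by (simp add: root_count_def)
  finally have L: "(\<Sum>p\<in>{p. poly G p = 0}. winding_number \<gamma> p * of_int (zorder (poly G) p)) = of_nat (root_count G (ball 0 1))" .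
  have "(\<Sum>p\<in>{p. poly (monom c k) p = 0}. winding_number \<gamma> p * of_int (zorder (poly (monom c k)) p)) = of_nat k"
  proof (cases "k = 0")
    case True
    then show ?thesis using c0 by (simp add: poly_monom)
  next
    case False
    have "{p. poly (monom c k) p = 0} = {0}" using False c0 by (auto simp: poly_monom)
    then show ?thesis unfolding \<gamma>_def
      using zorder_poly[OF mc0, of 0] c0 winding_number_circlepath_centre[of 1 0] by simp
  qed
  with R L show ?thesis by simp
qed


lemma eps_bound:
  fixes n :: nat
  assumes n2: "n \<ge> 2"
  defines "N \<equiv> nat \<lceil>log 2 (1 + log 2 (real n))\<rceil> + 5"
  shows "(2 * sqrt 2 / 3) ^ (2^N) < 1 / (16 * real n)"
proof -
  define L where "L = log 2 (real n)"
  define c where "c = nat \<lceil>log 2 (1 + L)\<rceil>"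
  define t :: nat where "t = 2^c"
  define q :: real where "q = (8/9)^16"
  have q0: "0 \<le> q" "q \<le> 1/6" unfolding q_def by (simp_all add: power_divide)
  have L1: "L \<ge> 1" unfolding L_def using n2 by simp
  have nL: "2 powr L = real n" unfolding L_def using n2 by simp
  have "real t = 2 powr real c" unfolding t_def by (simp add: powr_realpow)
  also have "\<dots> \<ge> 2 powr log 2 (1 + L)"
    unfolding c_def by (intro powr_mono) linarith+
  also have "2 powr log 2 (1 + L) = 1 + L" using L1 by simp
  finally have tL: "real t \<ge> 1 + L" .
  have s2: "(2 * sqrt 2 / 3)^2 = (8/9::real)"
    by (simp add: power_divide power_mult_distrib)
  have "(2 * sqrt 2 / 3) ^ (2^N) = ((2 * sqrt 2 / 3)^2) ^ (16 * t)"
    unfolding N_def t_def c_def L_def by (simp add: power_add mult.commute flip: power_mult)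
  also have "\<dots> = q ^ t" unfolding s2 q_def by (simp add: power_mult)
  also have "\<dots> = q powr real t" unfolding q_def by (simp add: powr_realpow)
  also have "\<dots> \<le> q powr (1 + L)"
    by (rule powr_mono'[OF tL]) (use q0 in auto)
  also have "\<dots> = q * q powr L" using q0 by (simp add: powr_add q_def)
  finally have a: "(2 * sqrt 2 / 3) ^ (2^N) \<le> q * q powr L" .
  have "(2*q) powr L \<le> (2*q) powr 1"
    by (rule powr_mono'[OF L1]) (use q0 in auto)
  hence "2 powr L * q powr L \<le> 2 * q" using q0 by (simp add: powr_mult)
  hence b: "q powr L \<le> 2 * q / real n" using n2 by (simp add: nL field_simps)
  have "q * q powr L \<le> q * (2 * q / real n)"
    by (rule mult_left_mono[OF b]) (use q0 in simp)
  also have "\<dots> < 1 / (16 * real n)"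
  proof -
    have "q * q \<le> 1/36" using q0 mult_mono[OF q0(2) q0(2)] by simp
    thus ?thesis using n2 by (simp add: field_simps)
  qed
  finally show ?thesis using a by simp
qed


lemma small_pow:
  fixes n j :: nat
  assumes "n \<ge> 1" "j \<le> n"
  shows "(1 + 1 / (16 * real n)) ^ j \<le> 11/10"
proof -
  define e where "e = 1 / (16 * real n)"
  have e0: "e \<ge> 0" unfolding e_def by simp
  have "(1 + e) ^ j \<le> (1 + e) ^ n" by (rule power_increasing) (use assms e0 in auto)
  also have "\<dots> \<le> exp e ^ n" by (rule power_mono) (use e0 in auto)
  also have "\<dots> = exp (real n * e)" by (simp add: exp_of_nat_mult)
  also have "real n * e = 1/16" unfolding e_def using assms by simp
  also have "exp (1/16::real) \<le> 1 + 1/16 + (1/16)^2" by (rule exp_bound) auto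
  also have "\<dots> \<le> 11/10" by (simp add: power2_eq_square)
  finally show ?thesis unfolding e_def .
qed

lemma linprod_flip:
  assumes "\<And>w. w \<in># B \<Longrightarrow> w \<noteq> (0::complex)"
  shows "(\<Prod>w\<in>#B. [:-w, 1:]) = smult (\<Prod>w\<in>#B. -w) (\<Prod>w\<in>#B. [:1, -(1/w):])"
  using assms
proof (induction B)
  case (add x B)
  have e: "[:-x, 1:] = smult (-x) [:1, -(1/x):]" using add.prems[of x] by simp
  have "(\<Prod>w\<in>#add_mset x B. [:-w, 1:]) = [:-x, 1:] * (\<Prod>w\<in>#B. [:-w, 1:])" by simp
  also have "\<dots> = smult (-x) [:1, -(1/x):] * smult (\<Prod>w\<in>#B. -w) (\<Prod>w\<in>#B. [:1, -(1/w):])"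
    using add by (simp only: e) simp
  also have "\<dots> = smult (\<Prod>w\<in>#add_mset x B. -w) (\<Prod>w\<in>#add_mset x B. [:1, -(1/w):])"
    by (simp only: mult_smult_left mult_smult_right smult_smult prod_mset.add_mset image_mset_add_mset mult.commute)
  finally show ?case .
qed simp

lemma revprod_coeff0: "coeff (\<Prod>w\<in>#A. [:1, -w:] :: complex poly) 0 = 1"
  by (induction A) auto


theorem lemma3p6:
  fixes F :: "complex poly" and m :: complex and r :: real and k :: nat
  assumes "degree F \<ge> 2" and "r > 0"
  defines "n \<equiv> degree F"
    and "N \<equiv> nat \<lceil>log 2 (1 + log 2 (real (degree F)))\<rceil> + 5"
    and "\<rho>1 \<equiv> 2 * sqrt 2 / 3"
    and "\<rho>2 \<equiv> 4 / 3"
  shows "(1 / (16 * real n)) powr (1 / 2 ^ N) > \<rho>1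
         \<and> (isolating F \<rho>1 \<rho>2 m r k \<longrightarrow> T_graeffe N F k m r (3/2))
         \<and> (\<forall>K. K \<ge> 1 \<and> T_graeffe N F k m r K \<longrightarrow> root_count F (ball m r) = k)"
proof -
  have F0: "F \<noteq> 0" using assms(1) by auto
  have n2: "n \<ge> 2" using assms(1) by (simp add: n_def)
  define R where "R = proots F"
  have sR: "size R = n" unfolding R_def n_def by (rule size_proots_complex)
  define lc where "lc = lead_coeff F"
  have lc0: "lc \<noteq> 0" using F0 by (simp add: lc_def)
  define r' :: complex where "r' = of_real r"
  have r'0: "r' \<noteq> 0" using assms(2) by (simp add: r'_def)
  define M :: nat where "M = 2^N"
  have M0: "M > 0" by (simp add: M_def)
  define h where "h w = ((w - m) / r')^M" for w
  define C where "C = (lc * r'^n)^(2^N)"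
  have C0: "C \<noteq> 0" using lc0 r'0 by (simp add: C_def)
  have nh: "norm (h w) = (norm (w - m) / r)^M" for w
    using assms(2) by (simp add: h_def r'_def norm_power norm_divide)
  have Fdec: "F = smult lc (\<Prod>w\<in>#R. [:-w, 1:])"
    unfolding lc_def R_def by (rule complex_poly_decompose_multiset[symmetric])
  have "disk_poly F m r = smult lc (pcompose (\<Prod>w\<in>#R. [:-w, 1:]) [:m, r':])"
    unfolding disk_poly_def r'_def[symmetric] by (subst Fdec) (simp add: pcompose_smult)
  also have "\<dots> = smult (lc * r'^n) (\<Prod>w\<in>#image_mset (\<lambda>w. (w - m)/r') R. [:-w, 1:])"
    by (simp add: pcompose_linprod[OF r'0] sR image_mset.compositionality o_def)
  finally have DP: "disk_poly F m r = smult (lc * r'^n) (\<Prod>w\<in>#image_mset (\<lambda>w. (w - m)/r') R. [:-w, 1:])" .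
  define G where "G = graeffe_iter N (disk_poly F m r)"
  have Gf: "G = smult C (\<Prod>w\<in>#image_mset h R. [:-w, 1:])"
    unfolding G_def DP C_def
    by (subst graeffe_iter_linprod) (use lc0 r'0 in \<open>simp_all add: image_mset.compositionality o_def h_def M_def power_divide\<close>)
  have G0: "G \<noteq> 0" using C0 unfolding Gf by auto
  have pG: "proots G = image_mset h R"
    unfolding Gf using C0 by (simp add: proots_smult proots_linprod)
  have eps: "\<rho>1 ^ M < 1 / (16 * real n)"
    unfolding \<rho>1_def M_def N_def n_def by (rule eps_bound) (use n2 in \<open>simp add: n_def\<close>)
  have \<rho>1pos: "\<rho>1 > 0" by (simp add: \<rho>1_def)
  have P1: "(1 / (16 * real n)) powr (1 / 2 ^ N) > \<rho>1"
  proof -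
    have "\<rho>1 = (\<rho>1 ^ M) powr (1 / real M)"
      using \<rho>1pos M0 by (simp add: powr_realpow[symmetric] powr_powr)
    also have "\<dots> < (1 / (16 * real n)) powr (1 / real M)"
      by (rule powr_less_mono2) (use eps \<rho>1pos M0 in auto)
    finally show ?thesis by (simp add: M_def)
  qed
  have Pb: "\<forall>K. K \<ge> 1 \<and> T_graeffe N F k m r K \<longrightarrow> root_count F (ball m r) = k"
  proof (intro allI impI, elim conjE)
    fix K :: real assume K: "K \<ge> 1" and T: "T_graeffe N F k m r K"
    have "root_count G (ball 0 1) = k"
      using pellet[OF _ K] T unfolding T_graeffe_def G_def by blast
    hence "k = size (filter_mset (\<lambda>z. z \<in> ball 0 1) (image_mset h R))"
      using root_count_size[OF G0] pG by simp
    also have "\<dots> = size (filter_mset (\<lambda>z. h z \<in> ball 0 1) R)"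
      by (simp flip: image_mset_filter_mset_swap)
    also have "filter_mset (\<lambda>z. h z \<in> ball 0 1) R = filter_mset (\<lambda>z. z \<in> ball m r) R"
    proof (rule filter_mset_cong[OF refl])
      fix z
      have "h z \<in> ball 0 1 \<longleftrightarrow> (norm (z - m) / r)^M < 1" by (simp add: nh)
      also have "\<dots> \<longleftrightarrow> norm (z - m) / r < 1" using M0 assms(2) by (subst power_less_one_iff) auto
      also have "\<dots> \<longleftrightarrow> z \<in> ball m r" using assms(2) by (simp add: dist_norm norm_minus_commute)
      finally show "h z \<in> ball 0 1 \<longleftrightarrow> z \<in> ball m r" .
    qed
    finally show "root_count F (ball m r) = k"
      using root_count_size[OF F0] by (simp add: R_def)
  qed
  have Pa: "isolating F \<rho>1 \<rho>2 m r k \<longrightarrow> T_graeffe N F k m r (3/2)"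
  proof
    assume iso: "isolating F \<rho>1 \<rho>2 m r k"
    define R1 where "R1 = filter_mset (\<lambda>z. z \<in> ball m (\<rho>1 * r)) R"
    define R2 where "R2 = filter_mset (\<lambda>z. z \<notin> ball m (\<rho>1 * r)) R"
    have RR: "R = R1 + R2" unfolding R1_def R2_def by (rule multiset_partition)
    have k: "k = size R1"
      using iso root_count_size[OF F0] unfolding isolating_def R1_def R_def by simp
    have kn: "k \<le> n" unfolding k R1_def using sR size_filter_mset_lesseq by metis
    have s2n: "size R2 \<le> n" unfolding R2_def using sR size_filter_mset_lesseq by metis
    define e where "e = 1 / (16 * real n)"
    have e0: "e \<ge> 0" by (simp add: e_def)
    have b1: "norm (h z) \<le> e" if "z \<in># R1" for z
    proof -
      have "norm (z - m) < \<rho>1 * r" using that by (simp add: R1_def dist_norm norm_minus_commute)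
      hence "norm (z - m) / r \<le> \<rho>1" using assms(2) by (simp add: field_simps)
      hence "(norm (z - m) / r)^M \<le> \<rho>1^M" by (rule power_mono) (use assms(2) in simp)
      thus ?thesis using eps by (simp add: nh e_def)
    qed
    have 34: "3/4 \<le> \<rho>1"
    proof -
      have "9/8 \<le> sqrt 2" by (rule real_le_rsqrt) (simp add: power2_eq_square)
      thus ?thesis by (simp add: \<rho>1_def)
    qed
    have b2: "h z \<noteq> 0 \<and> norm (1 / h z) \<le> e" if "z \<in># R2" for z
    proof -
      have zR: "z \<in># R" and zn: "z \<notin> ball m (\<rho>1 * r)" using that by (auto simp: R2_def)
      have "poly F z = 0" using zR F0 by (simp add: R_def)
      hence "z \<notin> ball m (\<rho>2 * r)" using iso zn unfolding isolating_def by blast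
      hence d: "norm (z - m) \<ge> 4/3 * r" by (simp add: \<rho>2_def dist_norm norm_minus_commute)
      have dpos: "norm (z - m) > 0" using d assms(2) by linarith
      have hz: "h z \<noteq> 0" using nh[of z] dpos assms(2) M0 by auto
      have "r / norm (z - m) \<le> 3/4" using d dpos assms(2) by (simp add: field_simps)
      also have "\<dots> \<le> \<rho>1" by (rule 34)
      finally have "(r / norm (z - m))^M \<le> \<rho>1^M" by (intro power_mono) (use assms(2) dpos in auto)
      moreover have "norm (1 / h z) = (r / norm (z - m))^M"
        using dpos by (simp add: norm_divide nh power_divide)
      ultimately show ?thesis using hz eps by (simp add: e_def)
    qed
    define B1 where "B1 = image_mset h R1"
    define B2 where "B2 = image_mset (\<lambda>z. 1 / h z) R2"
    define P where "P = (\<Prod>w\<in>#B1. [:-w, 1:])"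
    define Q where "Q = (\<Prod>w\<in>#B2. [:1, -w:])"
    define D where "D = (\<Prod>w\<in>#image_mset h R2. -w)"
    have D0: "D \<noteq> 0" unfolding D_def using b2 by (auto simp: prod_mset_zero_iff)
    have "(\<Prod>w\<in>#image_mset h R2. [:-w, 1:]) = smult D (\<Prod>w\<in>#image_mset h R2. [:1, -(1/w):])"
      unfolding D_def by (rule linprod_flip) (use b2 in auto)
    also have "(\<Prod>w\<in>#image_mset h R2. [:1, -(1/w):]) = Q"
      by (simp add: Q_def B2_def image_mset.compositionality o_def)
    finally have QD: "(\<Prod>w\<in>#image_mset h R2. [:-w, 1:]) = smult D Q" .
    have GPQ: "G = smult (C * D) (P * Q)"
      unfolding Gf RR P_def B1_def by (simp add: QD)
    have TG: "T_graeffe N F k m r (3/2) \<longleftrightarrow> T_test k (3/2) (P * Q)"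
      unfolding T_graeffe_def G_def[symmetric] GPQ using C0 D0 by (simp add: T_test_smult)
    have Q0: "Q \<noteq> 0" using revprod_coeff0[of B2] unfolding Q_def by auto
    have P0: "P \<noteq> 0" unfolding P_def by auto
    have dP: "degree P = k" unfolding P_def B1_def k by (simp add: degree_linprod)
    have dPQ: "degree (P * Q) \<ge> k" using P0 Q0 dP by (simp add: degree_mult_eq)
    have pr1: "(\<Prod>w\<in>#B1. 1 + norm w) \<le> 11/10"
    proof -
      have "(\<Prod>w\<in>#B1. 1 + norm w) \<le> (1 + e) ^ size B1"
        by (rule prod_mset_le_pow) (use b1 in \<open>auto simp: B1_def\<close>)
      also have "\<dots> \<le> 11/10" unfolding e_def by (rule small_pow) (use n2 kn k in \<open>auto simp: B1_def\<close>)
      finally show ?thesis .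
    qed
    have pr2: "(\<Prod>w\<in>#B2. 1 + norm w) \<le> 11/10"
    proof -
      have "(\<Prod>w\<in>#B2. 1 + norm w) \<le> (1 + e) ^ size B2"
        by (rule prod_mset_le_pow) (use b2 in \<open>auto simp: B2_def\<close>)
      also have "\<dots> \<le> 11/10" unfolding e_def by (rule small_pow) (use n2 s2n in \<open>auto simp: B2_def\<close>)
      finally show ?thesis .
    qed
    have nP: "norm1 (P - monom 1 k) \<le> 1/10"
      using linprod_bound[of B1] pr1 unfolding P_def by (simp add: k B1_def)
    have nQ: "norm1 Q \<le> 11/10" "norm1 (Q - 1) \<le> 1/10"
      using revprod_bound[of B2] pr2 unfolding Q_def by auto
    have "P * Q - monom 1 k = (P - monom 1 k) * Q + monom 1 k * (Q - 1)"
      by (simp add: algebra_simps)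
    hence "norm1 (P * Q - monom 1 k) \<le> norm1 ((P - monom 1 k) * Q) + norm1 (monom 1 k * (Q - 1))"
      using norm1_add by metis
    also have "\<dots> \<le> norm1 (P - monom 1 k) * norm1 Q + norm1 (monom 1 k) * norm1 (Q - 1)"
      by (intro add_mono norm1_mult)
    also have "\<dots> \<le> 1/10 * (11/10) + 1 * (1/10)"
      using nP nQ by (intro add_mono mult_mono) (auto simp: norm1_nonneg)
    finally have "norm1 (P * Q - monom 1 k) < 2/5" by simp
    hence "T_test k (3/2) (P * Q)" by (intro test_from_norm1 dPQ)
    thus "T_graeffe N F k m r (3/2)" using TG by simp
  qed
  show ?thesis using P1 Pa Pb by blast
qed

end
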